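(* Let $q$ be a prime power, $n\ge 2$ and $\kappa$ integers with $2\le\kappa<n$, and let $\mathcal{C}_1\subseteq\mathbb{F}_q^n$ be a linear cyclic code of length $n$, dimension $\kappa-1$ and minimum Hamming distance $d$. Let $\mathbf{e}=(1,0,\dots,0)\in\mathbb{F}_q^n$ and $\mathcal{C}=\{\mathbf{a}+\mathbf{e}:\mathbf{a}\in\mathcal{C}_1\}$. Then $\mathcal{C}$ is a $\kappa$-WMU code with minimum Hamming distance $d$.
   Context: A linear cyclic code is a linear subspace of $\mathbb{F}_q^n$ closed under cyclic shifts. A code $\mathcal{C}\subseteq\mathbb{F}_q^n$ is $\kappa$-WMU ($1\le\kappa<n$) if for all not necessarily distinct $\mathbf{a},\mathbf{b}\in\mathcal{C}$ and all $\kappa\le l<n$, $(a_1,\dots,a_l)\ne(b_{n-l+1},\dots,b_n)$. *)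

theory Defs
  imports Complex_Main "HOL-Library.Function_Algebras"
begin

text \<open>Vectors of F_q^n are represented as functions nat => 'a that vanish
  outside the index range {0..<n} (0-based indexing).\<close>

definition fscale :: "'a::field \<Rightarrow> (nat \<Rightarrow> 'a) \<Rightarrow> (nat \<Rightarrow> 'a)" where
  "fscale c x = (\<lambda>i. c * x i)"

interpretation fv: vector_space "fscale :: 'a::field \<Rightarrow> (nat \<Rightarrow> 'a) \<Rightarrow> (nat \<Rightarrow> 'a)"
  by unfold_locales (auto simp: fscale_def algebra_simps fun_eq_iff)

definition Fn :: "nat \<Rightarrow> (nat \<Rightarrow> 'a::field) set" where
  "Fn n = {x. \<forall>i\<ge>n. x i = 0}"

definition linear_code :: "nat \<Rightarrow> (nat \<Rightarrow> 'a::field) set \<Rightarrow> bool" where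
  "linear_code n C \<longleftrightarrow> C \<subseteq> Fn n \<and> fv.subspace C"

definition cyc_shift :: "nat \<Rightarrow> (nat \<Rightarrow> 'a::field) \<Rightarrow> (nat \<Rightarrow> 'a)" where
  "cyc_shift n x = (\<lambda>i. if i < n then x ((i + n - 1) mod n) else 0)"

definition linear_cyclic_code :: "nat \<Rightarrow> (nat \<Rightarrow> 'a::field) set \<Rightarrow> bool" where
  "linear_cyclic_code n C \<longleftrightarrow> linear_code n C \<and> (\<forall>x\<in>C. cyc_shift n x \<in> C)"

definition hamming_dist :: "nat \<Rightarrow> (nat \<Rightarrow> 'a) \<Rightarrow> (nat \<Rightarrow> 'a) \<Rightarrow> nat" where
  "hamming_dist n x y = card {i. i < n \<and> x i \<noteq> y i}"

definition min_dist :: "nat \<Rightarrow> (nat \<Rightarrow> 'a) set \<Rightarrow> nat" where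
  "min_dist n C = Min {hamming_dist n x y | x y. x \<in> C \<and> y \<in> C \<and> x \<noteq> y}"

text \<open>kappa-WMU: for all a, b in C and kappa <= l < n,
  (a_1,...,a_l) differs from (b_{n-l+1},...,b_n); 0-based here.\<close>
definition WMU :: "nat \<Rightarrow> nat \<Rightarrow> (nat \<Rightarrow> 'a) set \<Rightarrow> bool" where
  "WMU n \<kappa> C \<longleftrightarrow> (\<forall>a\<in>C. \<forall>b\<in>C. \<forall>l. \<kappa> \<le> l \<and> l < n \<longrightarrow>
      \<not> (\<forall>i<l. a i = b (n - l + i)))"

definition unit_e :: "nat \<Rightarrow> 'a::field" where
  "unit_e = (\<lambda>i. if i = 0 then 1 else 0)"

end

theory Submission
  imports Defs "HOL-Library.FuncSet"
begin

lemma sum_fun_app: "(sum f A) (x::nat) = (\<Sum>a\<in>A. (f a x :: 'b::comm_monoid_add))"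
  by (induction A rule: infinite_finite_induct) (auto simp: plus_fun_def zero_fun_def)

lemma finite_Fn: "finite (Fn n :: (nat \<Rightarrow> 'a::{field,finite}) set)"
proof -
  let ?g = "\<lambda>x::nat \<Rightarrow> 'a. restrict x {..<n}"
  have "inj_on ?g (Fn n)"
  proof (rule inj_onI)
    fix x y assume "x \<in> Fn n" "y \<in> Fn n" "?g x = ?g y"
    show "x = y"
    proof
      fix i show "x i = y i"
      proof (cases "i < n")
        case True then show ?thesis using \<open>?g x = ?g y\<close> by (metis lessThan_iff restrict_apply')
      next
        case False then show ?thesis using \<open>x \<in> Fn n\<close> \<open>y \<in> Fn n\<close> by (simp add: Fn_def)
      qed
    qed
  qed
  moreover have "?g ` Fn n \<subseteq> PiE {..<n} (\<lambda>_. UNIV)" by (auto simp: image_subset_iff)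
  moreover have "finite (PiE {..<n} (\<lambda>_. (UNIV :: 'a set)))" by (rule finite_PiE) auto
  ultimately show ?thesis by (meson finite_imageD finite_subset)
qed

lemma card_le_dim_fin:
  assumes "B \<subseteq> V" "fv.independent B" "finite V"
  shows "card B \<le> fv.dim V"
proof -
  obtain B' where B': "B' \<subseteq> V" "fv.independent B'" "V \<subseteq> fv.span B'" "card B' = fv.dim V"
    by (rule fv.basis_exists)
  have "finite B'" using B'(1) assms(3) finite_subset by blast
  have "B \<subseteq> fv.span B'" using assms(1) B'(3) by blast
  from fv.independent_span_bound[OF \<open>finite B'\<close> assms(2) this] B'(4) show ?thesis by simp
qed

lemma shift_pow:
  assumes "x \<in> Fn n" "j \<le> n" "n \<ge> 1"
  shows "(cyc_shift n ^^ j) x = (\<lambda>i. if i < n then x ((i + (n - j)) mod n) else 0)"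
  using assms(2)
proof (induction j)
  case 0
  then show ?case using assms(1) by (auto simp: fun_eq_iff Fn_def)
next
  case (Suc j)
  have eq: "((i + (n - 1)) mod n + (n - j)) mod n = (i + (n - Suc j)) mod n" for i
  proof -
    have "((i + (n - 1)) mod n + (n - j)) mod n = (i + (n - 1) + (n - j)) mod n"
      by (simp add: mod_add_left_eq)
    also have "i + (n - 1) + (n - j) = (i + (n - Suc j)) + n" using Suc.prems assms(3) by simp
    finally show ?thesis by simp
  qed
  show ?case
  proof
    fix i
    show "(cyc_shift n ^^ Suc j) x i = (if i < n then x ((i + (n - Suc j)) mod n) else 0)"
    proof (cases "i < n")
      case True
      have "(cyc_shift n ^^ Suc j) x i = (cyc_shift n ^^ j) x ((i + (n - 1)) mod n)"
        using True assms(3) by (simp add: cyc_shift_def)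
      also have "\<dots> = x (((i + (n - 1)) mod n + (n - j)) mod n)"
        using Suc assms(3) by simp
      finally show ?thesis using True eq by simp
    qed (simp add: cyc_shift_def)
  qed
qed

lemma shift_pow_in:
  assumes "linear_cyclic_code n C" "x \<in> C"
  shows "(cyc_shift n ^^ j) x \<in> C"
  using assms by (induction j) (auto simp: linear_cyclic_code_def)

theorem mainTheorem6:
  fixes C1 :: "(nat \<Rightarrow> 'a::{field, finite}) set"
    and n \<kappa> d :: nat
  assumes "n \<ge> 2" and "2 \<le> \<kappa>" and "\<kappa> < n"
    and "linear_cyclic_code n C1"
    and "fv.dim C1 = \<kappa> - 1"
    and "min_dist n C1 = d"
  shows "WMU n \<kappa> ((\<lambda>a. a + unit_e) ` C1) \<and> min_dist n ((\<lambda>a. a + unit_e) ` C1) = d"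
proof
  have sub: "C1 \<subseteq> Fn n" and subsp: "fv.subspace C1"
    using assms(4) by (auto simp: linear_cyclic_code_def linear_code_def)
  have finC: "finite C1" using sub finite_Fn finite_subset by blast
  show "min_dist n ((\<lambda>a. a + unit_e) ` C1) = d"
  proof -
    have hd: "hamming_dist n (x + unit_e) (y + unit_e) = hamming_dist n x y" for x y :: "nat \<Rightarrow> 'a"
      unfolding hamming_dist_def by simp
    have "{hamming_dist n x y |x y. x \<in> (\<lambda>a. a + unit_e) ` C1 \<and> y \<in> (\<lambda>a. a + unit_e) ` C1 \<and> x \<noteq> y}
        = {hamming_dist n x y |x y. x \<in> C1 \<and> y \<in> C1 \<and> x \<noteq> y}"
      apply (auto simp: hd)
      subgoal for x y by blast
      subgoal for x y by (rule exI[of _ "x + unit_e"], rule exI[of _ "y + unit_e"], intro conjI, simp add: hd, erule imageI, erule imageI, simp)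
      done
    then show ?thesis using assms(6) unfolding min_dist_def by simp
  qed
  show "WMU n \<kappa> ((\<lambda>a. a + unit_e) ` C1)"
    unfolding WMU_def
  proof (clarify)
    fix a b l
    assume a: "a \<in> C1" and b: "b \<in> C1" and l: "\<kappa> \<le> l" "l < n"
      and eqs: "\<forall>i<l. (a + unit_e) i = (b + unit_e) (n - l + i)"
    define c where "c = (cyc_shift n ^^ l) b"
    have cC: "c \<in> C1" unfolding c_def by (rule shift_pow_in[OF assms(4) b])
    have bF: "b \<in> Fn n" using b sub by blast
    have ci: "c i = b (n - l + i)" if "i < l" for i
    proof -
      have "c = (\<lambda>i. if i < n then b ((i + (n - l)) mod n) else 0)"
        unfolding c_def using shift_pow[OF bF, of l] l assms(1) by auto
      then show ?thesis using that l by (simp add: add.commute)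
    qed
    define v where "v = a - c"
    have vC: "v \<in> C1" unfolding v_def using fv.subspace_diff[OF subsp a cC] .
    have vF: "v \<in> Fn n" using vC sub by blast
    have v0: "v 0 \<noteq> 0"
    proof -
      have "a 0 + 1 = b (n - l)" using spec[OF eqs, of 0] l assms(2) by (simp add: unit_e_def)
      then show ?thesis using ci[of 0] l assms(2) by (auto simp: v_def)
    qed
    have vi: "v i = 0" if "0 < i" "i < l" for i
    proof -
      have "a i = b (n - l + i)" using eqs that by (auto simp: unit_e_def)
      then show ?thesis using ci[of i] that by (auto simp: v_def)
    qed
    define w where "w j = (cyc_shift n ^^ j) v" for j
    have wC: "w j \<in> C1" for j unfolding w_def by (rule shift_pow_in[OF assms(4) vC])
    have shv: "w j = (\<lambda>i. if i < n then v ((i + (n - j)) mod n) else 0)" if "j \<le> n" for j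
      unfolding w_def using shift_pow[OF vF, of j] that l assms(1) by auto
    have wjj: "w j j \<noteq> 0" if "j < \<kappa>" for j
      using that l v0 shv[of j] by auto
    have wji: "w j i = 0" if "j < i" "i < l" for i j
    proof -
      have "(i + (n - j)) mod n = i - j"
        using that l by (simp add: mod_if)
      then show ?thesis using that l vi[of "i - j"] shv[of j] by auto
    qed
    have inj: "inj_on w {..<\<kappa>}"
    proof (rule inj_onI)
      fix j j' assume j: "j \<in> {..<\<kappa>}" "j' \<in> {..<\<kappa>}" "w j = w j'"
      show "j = j'"
      proof (rule ccontr)
        assume "j \<noteq> j'"
        then consider "j < j'" | "j' < j" by linarith
        then show False
        proof cases
          case 1 then show ?thesis using j wjj[of j'] wji[of j j'] l by auto
        next
          case 2 then show ?thesis using j wjj[of j] wji[of j' j] l by auto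
        qed
      qed
    qed
    have indep: "fv.independent (w ` {..<\<kappa>})"
    proof (rule fv.independent_if_scalars_zero)
      show "finite (w ` {..<\<kappa>})" by simp
      fix f x assume sum0: "(\<Sum>x\<in>w ` {..<\<kappa>}. fscale (f x) x) = 0" and x: "x \<in> w ` {..<\<kappa>}"
      have s: "(\<Sum>j<\<kappa>. fscale (f (w j)) (w j)) = 0"
        using sum0 by (simp add: sum.reindex[OF inj])
      show "f x = 0"
      proof (rule ccontr)
        assume fx: "f x \<noteq> 0"
        define J where "J = {j. j < \<kappa> \<and> f (w j) \<noteq> 0}"
        have "J \<noteq> {}" using x fx J_def by auto
        moreover have "finite J" unfolding J_def by simp
        ultimately have mJ: "Max J \<in> J" and mx: "\<And>j. j \<in> J \<Longrightarrow> j \<le> Max J" by auto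
        define m where "m = Max J"
        have mk: "m < \<kappa>" "f (w m) \<noteq> 0" using mJ unfolding m_def J_def by auto
        have "0 = (\<Sum>j<\<kappa>. fscale (f (w j)) (w j)) m" using s by simp
        also have "\<dots> = (\<Sum>j<\<kappa>. f (w j) * w j m)"
          by (simp add: sum_fun_app fscale_def)
        also have "\<dots> = (\<Sum>j\<in>{m}. f (w j) * w j m)"
        proof (rule sum.mono_neutral_right; (intro ballI)?)
          fix j assume "j \<in> {..<\<kappa>} - {m}"
          then have "j \<in> {..<\<kappa>}" "j \<noteq> m" by auto
          then consider "j < m" | "m < j" "j < \<kappa>" by fastforce
          then show "f (w j) * w j m = 0"
          proof cases
            case 1 then show ?thesis using wji[of j m] mk l by auto
          next
            case 2
            then have "j \<notin> J" using mx m_def by fastforce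
            then show ?thesis using 2 J_def by auto
          qed
        qed (use mk in auto)
        also have "\<dots> = f (w m) * w m m" by simp
        finally show False using mk wjj[of m] by simp
      qed
    qed
    have "card (w ` {..<\<kappa>}) \<le> fv.dim C1"
      by (rule card_le_dim_fin[OF _ indep finC]) (auto intro: wC)
    then show False using card_image[OF inj] assms(2,5) by simp
  qed
qed

end
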